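(* Let $\gamma\in(1,2]$, $\delta>0$, $L>0$. Assume that $f$ is convex and $L$-smooth relative to $d$ on $Q$, that $V$ satisfies the triangular scaling property with scaling factor $\gamma$, and that for every $y\in Q$ the pair $(f_\delta(y),\nabla f_\delta(y))$ is a $(\delta,L)$-oracle of $f$ at $y$. Then the sequences $\{\theta_k\},\{x_k\},\{z_k\}$ generated by Algorithm AccBPGM-1 satisfy, for every $k\ge0$ and every $x\in Q$, $$\frac{1}{\theta_k^{\gamma}}\big(f(x_{k+1})-f(x)\big)+LV(x,z_{k+1})\le\frac{1-\theta_k}{\theta_k^{\gamma}}\big(f(x_k)-f(x)\big)+LV(x,z_k)+\frac{\delta}{\theta_k^{\gamma}}.$$
   Context: Setting. $\mathbb{E}$ is a finite-dimensional real vector space with a norm $\|\cdot\|$ and dual space $\mathbb{E}^*$; $\langle g,x\rangle$ denotes the value of $g\in\mathbb{E}^*$ at $x\in\mathbb{E}$. $Q\subset\mathbb{E}$ is a closed convex set. $f:Q\to\mathbb{R}$ is convex and differentiable on an open set containing the relative interior $\mathrm{rint}\,Q$. The prox-function $d:Q\to\mathbb{R}$ is continuously differentiable and $1$-strongly convex with respect to $\|\cdot\|$. The Bregman divergence is $V(x,y)=d(x)-d(y)-\langle\nabla d(y),x-y\rangle$. All minimization subproblems appearing in the algorithms are assumed to have minimizers. Relative smoothness: $f$ is $L$-smooth relative to $d$ on $Q$ if $f(y)\le f(x)+\langle\nabla f(x),y-x\rangle+LV(y,x)$ for all $x\in\mathrm{rint}\,Q$, $y\in Q$. Triangular scaling property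 with factor $\gamma>0$: $V((1-\theta)x+\theta z,(1-\theta)x+\theta\tilde z)\le\theta^{\gamma}V(z,\tilde z)$ for all $x,z,\tilde z\in Q$ and all $\theta\in[0,1]$. $(\delta,L)$-oracle: a pair $(f_\delta(y),\nabla f_\delta(y))\in\mathbb{R}\times\mathbb{E}^*$ is a $(\delta,L)$-oracle of $f$ at $y$ if $0\le f(x)-\big(f_\delta(y)+\langle\nabla f_\delta(y),x-y\rangle\big)\le LV(x,y)+\delta$ for all $x\in Q$. Notation: $g(x|y):=f_\delta(y)+\langle\nabla f_\delta(y),x-y\rangle$. Algorithm AccBPGM-1. Input: $x_0\in\mathrm{rint}\,Q$, $\gamma\in(1,2]$, $\delta>0$, $L>0$. Set $z_0=x_0$, $\theta_0=1$. For $k=0,1,2,\dots$: $y_k=(1-\theta_k)x_k+\theta_kz_k$; $z_{k+1}=\arg\min_{z\in Q}\{g(z|y_k)+\theta_k^{\gamma-1}LV(z,z_k)\}$; $x_{k+1}=(1-\theta_k)x_k+\theta_kz_{k+1}$; choose $\theta_{k+1}\in(0,1]$ with $\frac{1-\theta_{k+1}}{\theta_{k+1}^{\gamma}}\le\frac{1}{\theta_k^{\gamma}}$. *)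

theory Defs
  imports "HOL-Analysis.Analysis"
begin

text \<open>The space E is a finite-dimensional real vector space ('a :: euclidean_space),
  equipped with an arbitrary norm nrm (not necessarily the Euclidean one).
  The dual space E* is modelled as the bounded (= all, in finite dimension)
  linear functionals 'a \<Rightarrow>L real; the pairing is blinfun_apply.\<close>

definition is_norm :: "('a::real_vector \<Rightarrow> real) \<Rightarrow> bool" where
  "is_norm nrm \<longleftrightarrow> (\<forall>x. 0 \<le> nrm x) \<and> (\<forall>x. nrm x = 0 \<longleftrightarrow> x = 0)
     \<and> (\<forall>c x. nrm (c *\<^sub>R x) = \<bar>c\<bar> * nrm x) \<and> (\<forall>x y. nrm (x + y) \<le> nrm x + nrm y)"

definition strongly_convex_on1 :: "('a::real_vector \<Rightarrow> real) \<Rightarrow> 'a set \<Rightarrow> ('a \<Rightarrow> real) \<Rightarrow> bool" where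
  "strongly_convex_on1 nrm Q d \<longleftrightarrow> (\<forall>x\<in>Q. \<forall>y\<in>Q. \<forall>t::real. 0 \<le> t \<longrightarrow> t \<le> 1 \<longrightarrow>
      d (t *\<^sub>R x + (1 - t) *\<^sub>R y) \<le> t * d x + (1 - t) * d y - t * (1 - t) / 2 * (nrm (x - y))\<^sup>2)"

definition bregman :: "('a::real_normed_vector \<Rightarrow> real) \<Rightarrow> ('a \<Rightarrow> ('a \<Rightarrow>\<^sub>L real)) \<Rightarrow> 'a \<Rightarrow> 'a \<Rightarrow> real" where
  "bregman d Dd x y = d x - d y - blinfun_apply (Dd y) (x - y)"

definition rel_smooth :: "('a::euclidean_space \<Rightarrow> real) \<Rightarrow> ('a \<Rightarrow> ('a \<Rightarrow>\<^sub>L real)) \<Rightarrow>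
    ('a \<Rightarrow> real) \<Rightarrow> ('a \<Rightarrow> ('a \<Rightarrow>\<^sub>L real)) \<Rightarrow> 'a set \<Rightarrow> real \<Rightarrow> bool" where
  "rel_smooth f Df d Dd Q L \<longleftrightarrow> (\<forall>x\<in>rel_interior Q. \<forall>y\<in>Q.
      f y \<le> f x + blinfun_apply (Df x) (y - x) + L * bregman d Dd y x)"

definition tri_scaling :: "('a::real_normed_vector \<Rightarrow> real) \<Rightarrow> ('a \<Rightarrow> ('a \<Rightarrow>\<^sub>L real)) \<Rightarrow> 'a set \<Rightarrow> real \<Rightarrow> bool" where
  "tri_scaling d Dd Q \<gamma> \<longleftrightarrow> (\<forall>x\<in>Q. \<forall>z\<in>Q. \<forall>z'\<in>Q. \<forall>\<theta>::real. 0 \<le> \<theta> \<longrightarrow> \<theta> \<le> 1 \<longrightarrow>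
      bregman d Dd ((1 - \<theta>) *\<^sub>R x + \<theta> *\<^sub>R z) ((1 - \<theta>) *\<^sub>R x + \<theta> *\<^sub>R z') \<le> \<theta> powr \<gamma> * bregman d Dd z z')"

definition is_delta_L_orcl :: "('a::real_normed_vector \<Rightarrow> real) \<Rightarrow> ('a \<Rightarrow> real) \<Rightarrow> ('a \<Rightarrow> ('a \<Rightarrow>\<^sub>L real)) \<Rightarrow>
    'a set \<Rightarrow> real \<Rightarrow> real \<Rightarrow> real \<Rightarrow> ('a \<Rightarrow>\<^sub>L real) \<Rightarrow> 'a \<Rightarrow> bool" where
  "is_delta_L_orcl f d Dd Q \<delta> L fy gy y \<longleftrightarrow> (\<forall>x\<in>Q.
      0 \<le> f x - (fy + blinfun_apply gy (x - y)) \<and>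
      f x - (fy + blinfun_apply gy (x - y)) \<le> L * bregman d Dd x y + \<delta>)"

definition AccBPGM1 :: "('a::real_normed_vector \<Rightarrow> real) \<Rightarrow> ('a \<Rightarrow> ('a \<Rightarrow>\<^sub>L real)) \<Rightarrow> 'a set \<Rightarrow>
    ('a \<Rightarrow> real) \<Rightarrow> ('a \<Rightarrow> ('a \<Rightarrow>\<^sub>L real)) \<Rightarrow> real \<Rightarrow> real \<Rightarrow>
    (nat \<Rightarrow> real) \<Rightarrow> (nat \<Rightarrow> 'a) \<Rightarrow> (nat \<Rightarrow> 'a) \<Rightarrow> (nat \<Rightarrow> 'a) \<Rightarrow> bool" where
  "AccBPGM1 d Dd Q fd gd \<gamma> L \<theta> x y z \<longleftrightarrow>
     x 0 \<in> rel_interior Q \<and> z 0 = x 0 \<and> \<theta> 0 = 1 \<and>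
     (\<forall>k. y k = (1 - \<theta> k) *\<^sub>R x k + \<theta> k *\<^sub>R z k
        \<and> z (Suc k) \<in> Q
        \<and> (\<forall>w\<in>Q. fd (y k) + blinfun_apply (gd (y k)) (z (Suc k) - y k)
                    + \<theta> k powr (\<gamma> - 1) * L * bregman d Dd (z (Suc k)) (z k)
                 \<le> fd (y k) + blinfun_apply (gd (y k)) (w - y k)
                    + \<theta> k powr (\<gamma> - 1) * L * bregman d Dd w (z k))
        \<and> x (Suc k) = (1 - \<theta> k) *\<^sub>R x k + \<theta> k *\<^sub>R z (Suc k)
        \<and> 0 < \<theta> (Suc k) \<and> \<theta> (Suc k) \<le> 1
        \<and> (1 - \<theta> (Suc k)) / \<theta> (Suc k) powr \<gamma> \<le> 1 / \<theta> k powr \<gamma>)"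

end

theory Submission
  imports Defs
begin

lemma dir_deriv:
  fixes d :: "'a::euclidean_space \<Rightarrow> real"
  assumes "(d has_derivative blinfun_apply D) (at z)"
  shows "((\<lambda>t. (d (z + t *\<^sub>R v) - d z) / t) \<longlongrightarrow> blinfun_apply D v) (at_right 0)"
proof -
  have l: "((\<lambda>t::real. z + t *\<^sub>R v) has_derivative (\<lambda>t. t *\<^sub>R v)) (at 0)"
    by (auto intro!: derivative_eq_intros)
  have "((\<lambda>t. d (z + t *\<^sub>R v)) has_derivative (\<lambda>t. blinfun_apply D (t *\<^sub>R v))) (at 0)"
    using has_derivative_compose[OF l, of d] assms by simp
  hence "((\<lambda>t. d (z + t *\<^sub>R v)) has_field_derivative blinfun_apply D v) (at 0)"
    unfolding has_field_derivative_def
    by (simp add: blinfun.scaleR_right) (metis (no_types, lifting) ext mult.commute)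
  hence "((\<lambda>t. (d (z + t *\<^sub>R v) - d z) / (t - 0)) \<longlongrightarrow> blinfun_apply D v) (at 0)"
    using has_field_derivative_iff[of "\<lambda>t. d (z + t *\<^sub>R v)" "blinfun_apply D v" 0 UNIV]
    by (simp only: scaleR_zero_left add_0_right)
  hence "((\<lambda>t. (d (z + t *\<^sub>R v) - d z) / (t - 0)) \<longlongrightarrow> blinfun_apply D v) (at_right 0)"
    by (rule tendsto_mono[OF at_le[OF subset_UNIV]])
  thus ?thesis by simp
qed

lemma opt_cond:
  fixes d :: "'a::euclidean_space \<Rightarrow> real"
  assumes D: "(d has_derivative blinfun_apply D1) (at z1)"
    and Q: "convex Q" and z1: "z1 \<in> Q" and w: "w \<in> Q"
    and min: "\<forall>u\<in>Q. blinfun_apply G (z1 - y) + c * (d z1 - e (z1))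
                  \<le> blinfun_apply G (u - y) + c * (d u - e u)"
    and e: "\<And>u. e u = a + blinfun_apply E u"
  shows "0 \<le> blinfun_apply G (w - z1) + c * (blinfun_apply D1 (w - z1) - blinfun_apply E (w - z1))"
proof -
  let ?v = "w - z1"
  have lim: "((\<lambda>t. blinfun_apply G ?v + c * ((d (z1 + t *\<^sub>R ?v) - d z1) / t - blinfun_apply E ?v))
     \<longlongrightarrow> blinfun_apply G ?v + c * (blinfun_apply D1 ?v - blinfun_apply E ?v)) (at_right 0)"
    by (intro tendsto_intros dir_deriv[OF D])
  have ev: "\<forall>\<^sub>F t in at_right 0. 0 \<le> blinfun_apply G ?v + c * ((d (z1 + t *\<^sub>R ?v) - d z1) / t - blinfun_apply E ?v)"
  proof -
    have "\<forall>\<^sub>F t in at_right (0::real). t < 1"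
      unfolding eventually_at_right_field by (intro exI[of _ 1]) auto
    moreover have "\<forall>\<^sub>F t in at_right (0::real). 0 < t"
      by (simp add: eventually_at_right_less)
    ultimately show ?thesis
    proof (rule eventually_elim2)
      fix t :: real assume t: "t < 1" "0 < t"
      have "z1 + t *\<^sub>R ?v = (1 - t) *\<^sub>R z1 + t *\<^sub>R w" by (simp add: algebra_simps)
      hence inQ: "z1 + t *\<^sub>R ?v \<in> Q" using convexD[OF Q z1 w, of "1-t" t] t by simp
      have "blinfun_apply G (z1 - y) + c * (d z1 - e z1)
           \<le> blinfun_apply G (z1 + t *\<^sub>R ?v - y) + c * (d (z1 + t *\<^sub>R ?v) - e (z1 + t *\<^sub>R ?v))"
        using min inQ by blast
      hence "0 \<le> t * blinfun_apply G ?v + c * ((d (z1 + t *\<^sub>R ?v) - d z1) - t * blinfun_apply E ?v)"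
        by (simp add: e blinfun.diff_right blinfun.add_right blinfun.scaleR_right algebra_simps)
      hence "0 \<le> (t * blinfun_apply G ?v + c * ((d (z1 + t *\<^sub>R ?v) - d z1) - t * blinfun_apply E ?v)) / t"
        using t by simp
      also have "\<dots> = blinfun_apply G ?v + c * ((d (z1 + t *\<^sub>R ?v) - d z1) / t - blinfun_apply E ?v)"
        using t by (simp add: field_simps)
      finally show "0 \<le> blinfun_apply G ?v + c * ((d (z1 + t *\<^sub>R ?v) - d z1) / t - blinfun_apply E ?v)" .
    qed
  qed
  show ?thesis
    by (rule tendsto_lowerbound[OF lim ev]) simp
qed


lemma three_point:
  fixes d :: "'a::euclidean_space \<Rightarrow> real"
  assumes D: "(d has_derivative blinfun_apply (Dd z1)) (at z1)"
    and Q: "convex Q" and z1: "z1 \<in> Q" and w: "w \<in> Q"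
    and min: "\<forall>u\<in>Q. fy + blinfun_apply G (z1 - y) + c * bregman d Dd z1 zk
                  \<le> fy + blinfun_apply G (u - y) + c * bregman d Dd u zk"
  shows "blinfun_apply G (z1 - y) + c * bregman d Dd z1 zk
     \<le> blinfun_apply G (w - y) + c * bregman d Dd w zk - c * bregman d Dd w z1"
proof -
  have e: "\<And>u. d zk + blinfun_apply (Dd zk) (u - zk) = (d zk - blinfun_apply (Dd zk) zk) + blinfun_apply (Dd zk) u"
    by (simp add: blinfun.diff_right)
  have min': "\<forall>u\<in>Q. blinfun_apply G (z1 - y) + c * (d z1 - (\<lambda>u. d zk + blinfun_apply (Dd zk) (u - zk)) z1)
                  \<le> blinfun_apply G (u - y) + c * (d u - (\<lambda>u. d zk + blinfun_apply (Dd zk) (u - zk)) u)"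
    using min by (simp add: bregman_def algebra_simps)
  have "0 \<le> blinfun_apply G (w - z1) + c * (blinfun_apply (Dd z1) (w - z1) - blinfun_apply (Dd zk) (w - z1))"
    by (rule opt_cond[OF D Q z1 w min' e])
  thus ?thesis
    by (simp add: bregman_def blinfun.diff_right algebra_simps)
qed

theorem lemma5:
  fixes Q :: "'a::euclidean_space set"
    and nrm :: "'a \<Rightarrow> real"
    and f d fd :: "'a \<Rightarrow> real"
    and Df Dd gd :: "'a \<Rightarrow> ('a \<Rightarrow>\<^sub>L real)"
    and \<gamma> \<delta> L :: real
    and \<theta> :: "nat \<Rightarrow> real"
    and x y z :: "nat \<Rightarrow> 'a"
  assumes norm: "is_norm nrm"
    and Q: "closed Q" "convex Q"
    and f_diff: "\<exists>U. open U \<and> rel_interior Q \<subseteq> U \<and> (\<forall>u\<in>U. (f has_derivative blinfun_apply (Df u)) (at u))"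
    and f_convex: "convex_on Q f"
    and d_C1: "\<exists>U. open U \<and> Q \<subseteq> U \<and> (\<forall>u\<in>U. (d has_derivative blinfun_apply (Dd u)) (at u))
                  \<and> continuous_on U Dd"
    and d_sc: "strongly_convex_on1 nrm Q d"
    and \<gamma>: "1 < \<gamma>" "\<gamma> \<le> 2"
    and \<delta>: "0 < \<delta>"
    and L: "0 < L"
    and smooth: "rel_smooth f Df d Dd Q L"
    and scaling: "tri_scaling d Dd Q \<gamma>"
    and orcl: "\<forall>u\<in>Q. is_delta_L_orcl f d Dd Q \<delta> L (fd u) (gd u) u"
    and alg: "AccBPGM1 d Dd Q fd gd \<gamma> L \<theta> x y z"
  shows "\<forall>k. \<forall>w\<in>Q.
     1 / \<theta> k powr \<gamma> * (f (x (Suc k)) - f w) + L * bregman d Dd w (z (Suc k))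
       \<le> (1 - \<theta> k) / \<theta> k powr \<gamma> * (f (x k) - f w) + L * bregman d Dd w (z k) + \<delta> / \<theta> k powr \<gamma>"
proof (intro allI ballI)
  fix k w assume w: "w \<in> Q"
  let ?B = "bregman d Dd"
  have ysd: "\<And>k. y k = (1 - \<theta> k) *\<^sub>R x k + \<theta> k *\<^sub>R z k" using alg unfolding AccBPGM1_def by blast
  have zQ': "\<And>k. z (Suc k) \<in> Q" using alg unfolding AccBPGM1_def by blast
  have mins: "\<And>k. \<forall>w\<in>Q. fd (y k) + blinfun_apply (gd (y k)) (z (Suc k) - y k)
                    + \<theta> k powr (\<gamma> - 1) * L * bregman d Dd (z (Suc k)) (z k)
                 \<le> fd (y k) + blinfun_apply (gd (y k)) (w - y k)
                    + \<theta> k powr (\<gamma> - 1) * L * bregman d Dd w (z k)"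
    using alg unfolding AccBPGM1_def by blast
  have xsd: "\<And>k. x (Suc k) = (1 - \<theta> k) *\<^sub>R x k + \<theta> k *\<^sub>R z (Suc k)"
    using alg unfolding AccBPGM1_def by blast
  have th: "\<And>k. 0 < \<theta> k \<and> \<theta> k \<le> 1"
  proof -
    fix k show "0 < \<theta> k \<and> \<theta> k \<le> 1"
      using alg unfolding AccBPGM1_def by (cases k) auto
  qed
  have x0: "x 0 \<in> Q" "z 0 = x 0" using alg rel_interior_subset unfolding AccBPGM1_def by blast+
  have xzQ: "x k \<in> Q \<and> z k \<in> Q" for k
  proof (induction k)
    case 0 thus ?case using x0 by simp
  next
    case (Suc k)
    have "x (Suc k) \<in> Q" unfolding xsd
      using convexD[OF Q(2), of "x k" "z (Suc k)" "1 - \<theta> k" "\<theta> k"] Suc th[of k] zQ'[of k] by auto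
    thus ?case using zQ' by blast
  qed
  have yQ: "y k \<in> Q" unfolding ysd
    using convexD[OF Q(2), of "x k" "z k" "1 - \<theta> k" "\<theta> k"] xzQ th[of k] by auto
  define t where "t = \<theta> k"
  define G where "G = gd (y k)"
  define c where "c = t powr (\<gamma> - 1) * L"
  have t: "0 < t" "t \<le> 1" using th[of k] t_def by auto
  have tc: "t * c = t powr \<gamma> * L"
    unfolding c_def using t by (simp add: powr_diff field_simps)
  obtain U where U: "open U" "Q \<subseteq> U" "\<forall>u\<in>U. (d has_derivative blinfun_apply (Dd u)) (at u)"
    using d_C1 by blast
  have Dz1: "(d has_derivative blinfun_apply (Dd (z (Suc k)))) (at (z (Suc k)))"
    using U zQ' by blast
  have tp: "blinfun_apply G (z (Suc k) - y k) + c * ?B (z (Suc k)) (z k)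
     \<le> blinfun_apply G (w - y k) + c * ?B w (z k) - c * ?B w (z (Suc k))"
    apply (rule three_point[where Dd=Dd and d=d, OF Dz1 Q(2) zQ'[of k] w, of "fd (y k)"])
    using mins[of k] unfolding G_def c_def t_def by (simp add: mult.assoc)
  have x1Q: "x (Suc k) \<in> Q" using xzQ by blast
  have o1: "f (x (Suc k)) \<le> fd (y k) + blinfun_apply G (x (Suc k) - y k) + L * ?B (x (Suc k)) (y k) + \<delta>"
    using orcl yQ x1Q unfolding is_delta_L_orcl_def G_def by fastforce
  have o2: "fd (y k) + blinfun_apply G (x k - y k) \<le> f (x k)"
    using orcl yQ xzQ unfolding is_delta_L_orcl_def G_def by fastforce
  have o3: "fd (y k) + blinfun_apply G (w - y k) \<le> f w"
    using orcl yQ w unfolding is_delta_L_orcl_def G_def by fastforce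
  have lin: "x (Suc k) - y k = (1 - t) *\<^sub>R (x k - y k) + t *\<^sub>R (z (Suc k) - y k)"
    unfolding xsd t_def by (simp add: algebra_simps)
  have Glin: "blinfun_apply G (x (Suc k) - y k) = (1 - t) * blinfun_apply G (x k - y k) + t * blinfun_apply G (z (Suc k) - y k)"
    unfolding lin by (simp add: blinfun.add_right blinfun.scaleR_right)
  have sc: "?B (x (Suc k)) (y k) \<le> t powr \<gamma> * ?B (z (Suc k)) (z k)"
  proof -
    have "x k \<in> Q" "z k \<in> Q" using xzQ by auto
    thus ?thesis using scaling zQ'[of k] t unfolding tri_scaling_def xsd ysd t_def
      by (meson less_imp_le)
  qed
  have fd_split: "fd (y k) = (1 - t) * fd (y k) + t * fd (y k)" by (simp add: algebra_simps)
  have "f (x (Suc k)) \<le> (1 - t) * (fd (y k) + blinfun_apply G (x k - y k))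
       + t * (fd (y k) + blinfun_apply G (z (Suc k) - y k) + c * ?B (z (Suc k)) (z k)) + \<delta>"
  proof -
    have "L * ?B (x (Suc k)) (y k) \<le> L * (t powr \<gamma> * ?B (z (Suc k)) (z k))"
      using sc L by simp
    also have "\<dots> = t * (c * ?B (z (Suc k)) (z k))" using tc by (simp add: algebra_simps)
    finally show ?thesis using o1 Glin by (simp add: algebra_simps)
  qed
  also have "\<dots> \<le> (1 - t) * f (x k) + t * (f w + c * ?B w (z k) - c * ?B w (z (Suc k))) + \<delta>"
  proof -
    have a: "(1 - t) * (fd (y k) + blinfun_apply G (x k - y k)) \<le> (1 - t) * f (x k)"
      using o2 t by (intro mult_left_mono) auto
    have b: "fd (y k) + blinfun_apply G (z (Suc k) - y k) + c * ?B (z (Suc k)) (z k)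
        \<le> f w + c * ?B w (z k) - c * ?B w (z (Suc k))" using tp o3 by linarith
    have b': "t * (fd (y k) + blinfun_apply G (z (Suc k) - y k) + c * ?B (z (Suc k)) (z k))
        \<le> t * (f w + c * ?B w (z k) - c * ?B w (z (Suc k)))"
      using b t by (intro mult_left_mono) auto
    show ?thesis using a b' by linarith
  qed
  finally have chain: "f (x (Suc k)) \<le> (1 - t) * f (x k) + t * (f w + c * ?B w (z k) - c * ?B w (z (Suc k))) + \<delta>" .
  have main: "f (x (Suc k)) - f w \<le> (1 - t) * (f (x k) - f w)
      + t powr \<gamma> * L * (?B w (z k) - ?B w (z (Suc k))) + \<delta>"
  proof -
    have "t * (f w + c * ?B w (z k) - c * ?B w (z (Suc k))) = t * f w + (t * c) * (?B w (z k) - ?B w (z (Suc k)))"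
      by (simp add: algebra_simps)
    also have "\<dots> = t * f w + t powr \<gamma> * L * (?B w (z k) - ?B w (z (Suc k)))" using tc by simp
    finally show ?thesis using chain by (simp add: algebra_simps)
  qed
  have P: "0 < t powr \<gamma>" using t by simp
  have "1 / t powr \<gamma> * (f (x (Suc k)) - f w) \<le>
      1 / t powr \<gamma> * ((1 - t) * (f (x k) - f w) + t powr \<gamma> * L * (?B w (z k) - ?B w (z (Suc k))) + \<delta>)"
    using main P by (intro mult_left_mono) auto
  also have "\<dots> = (1 - t) / t powr \<gamma> * (f (x k) - f w) + L * ?B w (z k) - L * ?B w (z (Suc k)) + \<delta> / t powr \<gamma>"
    using P by (simp add: field_simps)
  finally show "1 / \<theta> k powr \<gamma> * (f (x (Suc k)) - f w) + L * ?B w (z (Suc k))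
       \<le> (1 - \<theta> k) / \<theta> k powr \<gamma> * (f (x k) - f w) + L * ?B w (z k) + \<delta> / \<theta> k powr \<gamma>"
    unfolding t_def by linarith
qed

end
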